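(* Let $\mathcal{T}$ be a periodic Cartesian mesh of the two-dimensional torus with $N_x\times N_y=N$ rectangular cells $c_{i,j}$, where cell $c_{i,j}$ has midpoint $(m^x_{i,j},m^y_{i,j})$ and side lengths $L^x_{i,j}$, $L^y_{i,j}$. Let $V$ be the space of vector fields $\mathbf{u}$ such that on each cell $c_{i,j}$, $$\mathbf{u}|_{c_{i,j}}\in\operatorname{span}\left\{\begin{pmatrix}1\\0\end{pmatrix},\ \begin{pmatrix}0\\1\end{pmatrix},\ \begin{pmatrix}\frac{2}{L^x_{i,j}}(m^x_{i,j}-x)\\ \frac{2}{L^y_{i,j}}(y-m^y_{i,j})\end{pmatrix}\right\}.$$ Then the subspace of $V$ of fields satisfying $[\![\mathbf{u}\cdot\mathbf{n}_f]\!]=0$ for every face $f$ of the mesh has dimension $N+1$.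
   Context: Each face $f$ carries a fixed unit normal $\mathbf{n}_f$; the cell into which $\mathbf{n}_f$ points is the right cell $R$, the other the left cell $L$, and $[\![\mathbf{u}\cdot\mathbf{n}_f]\!]=\mathbf{u}_R\cdot\mathbf{n}_f-\mathbf{u}_L\cdot\mathbf{n}_f$ (traces from each side along $f$). *)

theory Defs
  imports "HOL-Analysis.Analysis" "HOL-Library.Function_Algebras"
begin

text \<open>Periodic Cartesian (tensor-product) mesh of the 2-torus
  [0, sum hx) x [0, sum hy): Nx columns of widths hx 0, ..., hx (Nx-1) and
  Ny rows of heights hy 0, ..., hy (Ny-1).  Cell c_{i,j} (i < Nx, j < Ny) is
  [xb i, xb (i+1)] x [yb j, yb (j+1)], with side lengths L^x_{i,j} = hx i,
  L^y_{i,j} = hy j and midpoint (xb i + hx i / 2, yb j + hy j / 2).\<close>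

definition brk :: "(nat \<Rightarrow> real) \<Rightarrow> nat \<Rightarrow> real" where
  "brk h i = (\<Sum>k<i. h k)"

definition cell :: "(nat \<Rightarrow> real) \<Rightarrow> (nat \<Rightarrow> real) \<Rightarrow> nat \<Rightarrow> nat \<Rightarrow> (real \<times> real) set" where
  "cell hx hy i j = {brk hx i .. brk hx (Suc i)} \<times> {brk hy j .. brk hy (Suc j)}"

definition midx :: "(nat \<Rightarrow> real) \<Rightarrow> nat \<Rightarrow> real" where
  "midx hx i = brk hx i + hx i / 2"

definition midy :: "(nat \<Rightarrow> real) \<Rightarrow> nat \<Rightarrow> real" where
  "midy hy j = brk hy j + hy j / 2"

definition psi3 :: "(nat \<Rightarrow> real) \<Rightarrow> (nat \<Rightarrow> real) \<Rightarrow> nat \<Rightarrow> nat \<Rightarrow> real \<times> real \<Rightarrow> real \<times> real" where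
  "psi3 hx hy i j p = ((2 / hx i) * (midx hx i - fst p), (2 / hy j) * (snd p - midy hy j))"

text \<open>A broken (cell-wise defined) vector field is represented by the family of its
  restrictions to the closed cells: u i j is the field on cell c_{i,j} (extended by 0
  outside the cell and for indices outside the mesh).  Since every admissible local
  field is a polynomial, its value on the boundary of the closed cell is the trace
  from inside the cell.\<close>
type_synonym broken_field = "nat \<Rightarrow> nat \<Rightarrow> real \<times> real \<Rightarrow> real \<times> real"

definition Vspace :: "nat \<Rightarrow> nat \<Rightarrow> (nat \<Rightarrow> real) \<Rightarrow> (nat \<Rightarrow> real) \<Rightarrow> broken_field set" where
  "Vspace Nx Ny hx hy = {u.
     (\<forall>i j. (i < Nx \<and> j < Ny) \<longrightarrow>
        (\<exists>a b c. \<forall>p \<in> cell hx hy i j.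
            u i j p = a *\<^sub>R (1, 0) + b *\<^sub>R (0, 1) + c *\<^sub>R psi3 hx hy i j p)
        \<and> (\<forall>p. p \<notin> cell hx hy i j \<longrightarrow> u i j p = 0)) \<and>
     (\<forall>i j. \<not> (i < Nx \<and> j < Ny) \<longrightarrow> u i j = (\<lambda>p. 0))}"

text \<open>Vertical faces: the face between c_{i,j}
  (left cell L) and c_{(i+1) mod Nx, j} (right cell R), normal n = (1,0) pointing
  into R; on R it sits at x = xb ((i+1) mod Nx) (periodicity), on L at x = xb (i+1).
  Horizontal faces: between c_{i,j} (L) and c_{i,(j+1) mod Ny} (R), normal (0,1).\<close>
definition normal_jumps_vanish :: "nat \<Rightarrow> nat \<Rightarrow> (nat \<Rightarrow> real) \<Rightarrow> (nat \<Rightarrow> real) \<Rightarrow> broken_field \<Rightarrow> bool" where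
  "normal_jumps_vanish Nx Ny hx hy u \<longleftrightarrow>
     (\<forall>i < Nx. \<forall>j < Ny. \<forall>t \<in> {brk hy j .. brk hy (Suc j)}.
        u (Suc i mod Nx) j (brk hx (Suc i mod Nx), t) \<bullet> (1, 0)
          - u i j (brk hx (Suc i), t) \<bullet> (1, 0) = 0) \<and>
     (\<forall>i < Nx. \<forall>j < Ny. \<forall>t \<in> {brk hx i .. brk hx (Suc i)}.
        u i (Suc j mod Ny) (t, brk hy (Suc j mod Ny)) \<bullet> (0, 1)
          - u i j (t, brk hy (Suc j)) \<bullet> (0, 1) = 0)"

definition bscale :: "real \<Rightarrow> broken_field \<Rightarrow> broken_field" where
  "bscale r u = (\<lambda>i j p. r *\<^sub>R u i j p)"

end

theory Submission imports Defs begin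

lemma bscale_vs: "vector_space bscale"
  by unfold_locales (auto simp: bscale_def fun_eq_iff scaleR_add_right scaleR_add_left)

global_interpretation bs: vector_space bscale
  by (rule bscale_vs)

lemma bscale_apply[simp]: "bscale r u i j p = r *\<^sub>R u i j p"
  by (simp add: bscale_def)

lemma sum_fun_apply: "finite t \<Longrightarrow> (\<Sum>v\<in>t. f v) i j p = (\<Sum>v\<in>t. f v i j p)"
  by (induction t rule: finite_induct) auto

lemma fst_sum_bs: "finite t \<Longrightarrow> fst ((\<Sum>v\<in>t. bscale (w v) (f v)) i j p) = (\<Sum>v\<in>t. w v * fst (f v i j p))"
  by (induction t rule: finite_induct) auto
lemma snd_sum_bs: "finite t \<Longrightarrow> snd ((\<Sum>v\<in>t. bscale (w v) (f v)) i j p) = (\<Sum>v\<in>t. w v * snd (f v i j p))"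
  by (induction t rule: finite_induct) auto

lemma inner_10[simp]: "(a::real, b::real) \<bullet> (1, 0) = a" by (simp add: inner_prod_def)
lemma inner_01[simp]: "(a::real, b::real) \<bullet> (0, 1) = b" by (simp add: inner_prod_def)

lemma brk_Suc: "brk h (Suc i) = brk h i + h i" by (simp add: brk_def)
lemma brk_0[simp]: "brk h 0 = 0" by (simp add: brk_def)


lemma cyc_A:
  fixes a c :: "nat \<Rightarrow> real"
  assumes n: "n \<ge> 1" and rel: "\<forall>k<n. a (Suc k mod n) + c (Suc k mod n) = a k - c k"
    and z: "\<forall>k<n - 1. c k = 0"
  shows "c (n - 1) = 0"
proof (cases "n = 1")
  case True
  then show ?thesis using rel by auto
next
  case False
  then have n2: "n \<ge> 2" using n by auto
  have ak: "k < n - 1 \<longrightarrow> a k = a 0" for k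
  proof (induction k)
    case 0 then show ?case by simp
  next
    case (Suc k)
    show ?case
    proof
      assume k: "Suc k < n - 1"
      have "k < n" using k by simp
      then have "a (Suc k mod n) + c (Suc k mod n) = a k - c k" using rel by blast
      moreover have "Suc k mod n = Suc k" using k by simp
      ultimately show "a (Suc k) = a 0" using Suc z k by auto
    qed
  qed
  have "n - 2 < n" using n2 by simp
  then have "a (Suc (n - 2) mod n) + c (Suc (n - 2) mod n) = a (n - 2) - c (n - 2)" using rel by blast
  moreover have "Suc (n - 2) = n - 1" using n2 by simp
  moreover have "(n - 1) mod n = n - 1" using n2 by simp
  ultimately have e1: "a (n - 1) + c (n - 1) = a 0" using ak[of "n - 2"] z n2 by auto
  have "n - 1 < n" using n2 by simp
  then have "a (Suc (n - 1) mod n) + c (Suc (n - 1) mod n) = a (n - 1) - c (n - 1)" using rel by blast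
  moreover have "Suc (n - 1) mod n = 0" using n2 by simp
  ultimately have "a 0 + c 0 = a (n - 1) - c (n - 1)" by simp
  moreover have "c 0 = 0" using z n2 by auto
  ultimately show ?thesis using e1 by simp
qed

lemma cyc_B:
  fixes a c :: "nat \<Rightarrow> real"
  assumes rel: "\<forall>k<n. a (Suc k mod n) + c (Suc k mod n) = a k - c k"
    and z: "\<forall>k<n. c k = 0" and a0: "a 0 + c 0 = 0"
  shows "\<forall>k<n. a k = 0"
proof -
  have "k < n \<longrightarrow> a k = 0" for k
  proof (induction k)
    case 0 then show ?case using a0 z by auto
  next
    case (Suc k)
    show ?case
    proof
      assume k: "Suc k < n"
      have "k < n" using k by simp
      then have "a (Suc k mod n) + c (Suc k mod n) = a k - c k" using rel by blast
      moreover have "Suc k mod n = Suc k" using k by simp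
      ultimately show "a (Suc k) = 0" using Suc z k by auto
    qed
  qed
  then show ?thesis by auto
qed

locale mesh =
  fixes Nx Ny :: nat and hx hy :: "nat \<Rightarrow> real"
  assumes Nx: "Nx \<ge> 1" and Ny: "Ny \<ge> 1"
    and hxp: "\<And>i. i < Nx \<Longrightarrow> hx i > 0"
    and hyp: "\<And>j. j < Ny \<Longrightarrow> hy j > 0"
begin

definition mk :: "(nat \<Rightarrow> nat \<Rightarrow> real) \<Rightarrow> (nat \<Rightarrow> nat \<Rightarrow> real) \<Rightarrow> (nat \<Rightarrow> nat \<Rightarrow> real) \<Rightarrow> broken_field" where
  "mk \<alpha> \<beta> \<gamma> = (\<lambda>i j p. if i < Nx \<and> j < Ny \<and> p \<in> cell hx hy i j then
     (\<alpha> i j + \<gamma> i j * ((2 / hx i) * (midx hx i - fst p)),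
      \<beta> i j + \<gamma> i j * ((2 / hy j) * (snd p - midy hy j))) else 0)"

lemma mk_in_V: "mk \<alpha> \<beta> \<gamma> \<in> Vspace Nx Ny hx hy"
proof -
  have "\<exists>a b c. \<forall>p\<in>cell hx hy i j. mk \<alpha> \<beta> \<gamma> i j p = a *\<^sub>R (1, 0) + b *\<^sub>R (0, 1) + c *\<^sub>R psi3 hx hy i j p"
    if "i < Nx" "j < Ny" for i j
    using that by (intro exI[of _ "\<alpha> i j"] exI[of _ "\<beta> i j"] exI[of _ "\<gamma> i j"]) (auto simp: mk_def psi3_def)
  then show ?thesis unfolding Vspace_def by (auto simp: mk_def fun_eq_iff)
qed

lemma in_cell:
  assumes "i < Nx" "j < Ny" "x \<in> {brk hx i .. brk hx (Suc i)}" "y \<in> {brk hy j .. brk hy (Suc j)}"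
  shows "(x, y) \<in> cell hx hy i j"
  using assms by (simp add: cell_def)

lemma xrange: "i < Nx \<Longrightarrow> brk hx i \<in> {brk hx i .. brk hx (Suc i)} \<and> brk hx (Suc i) \<in> {brk hx i .. brk hx (Suc i)}
   \<and> midx hx i \<in> {brk hx i .. brk hx (Suc i)}"
  using hxp[of i] by (simp add: brk_Suc midx_def)

lemma yrange: "j < Ny \<Longrightarrow> brk hy j \<in> {brk hy j .. brk hy (Suc j)} \<and> brk hy (Suc j) \<in> {brk hy j .. brk hy (Suc j)}
   \<and> midy hy j \<in> {brk hy j .. brk hy (Suc j)}"
  using hyp[of j] by (simp add: brk_Suc midy_def)

lemma mk_left: "i < Nx \<Longrightarrow> j < Ny \<Longrightarrow> t \<in> {brk hy j .. brk hy (Suc j)} \<Longrightarrow>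
   fst (mk \<alpha> \<beta> \<gamma> i j (brk hx i, t)) = \<alpha> i j + \<gamma> i j"
  using in_cell[of i j "brk hx i" t] xrange[of i] hxp[of i] by (simp add: mk_def midx_def)

lemma mk_right: "i < Nx \<Longrightarrow> j < Ny \<Longrightarrow> t \<in> {brk hy j .. brk hy (Suc j)} \<Longrightarrow>
   fst (mk \<alpha> \<beta> \<gamma> i j (brk hx (Suc i), t)) = \<alpha> i j - \<gamma> i j"
  using in_cell[of i j "brk hx (Suc i)" t] xrange[of i] hxp[of i] by (simp add: mk_def midx_def brk_Suc)

lemma mk_bot: "i < Nx \<Longrightarrow> j < Ny \<Longrightarrow> t \<in> {brk hx i .. brk hx (Suc i)} \<Longrightarrow>
   snd (mk \<alpha> \<beta> \<gamma> i j (t, brk hy j)) = \<beta> i j - \<gamma> i j"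
  using in_cell[of i j t "brk hy j"] yrange[of j] hyp[of j] by (simp add: mk_def midy_def)

lemma mk_top: "i < Nx \<Longrightarrow> j < Ny \<Longrightarrow> t \<in> {brk hx i .. brk hx (Suc i)} \<Longrightarrow>
   snd (mk \<alpha> \<beta> \<gamma> i j (t, brk hy (Suc j))) = \<beta> i j + \<gamma> i j"
  using in_cell[of i j t "brk hy (Suc j)"] yrange[of j] hyp[of j] by (simp add: mk_def midy_def brk_Suc)

lemma mk_mid: "i < Nx \<Longrightarrow> j < Ny \<Longrightarrow> mk \<alpha> \<beta> \<gamma> i j (midx hx i, midy hy j) = (\<alpha> i j, \<beta> i j)"
  using in_cell[of i j "midx hx i" "midy hy j"] xrange[of i] yrange[of j] by (simp add: mk_def)

definition cok :: "(nat \<Rightarrow> nat \<Rightarrow> real) \<Rightarrow> (nat \<Rightarrow> nat \<Rightarrow> real) \<Rightarrow> (nat \<Rightarrow> nat \<Rightarrow> real) \<Rightarrow> bool" where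
  "cok \<alpha> \<beta> \<gamma> \<longleftrightarrow> (\<forall>k<Nx. \<forall>l<Ny. \<alpha> (Suc k mod Nx) l + \<gamma> (Suc k mod Nx) l = \<alpha> k l - \<gamma> k l) \<and>
     (\<forall>k<Nx. \<forall>l<Ny. \<beta> k (Suc l mod Ny) - \<gamma> k (Suc l mod Ny) = \<beta> k l + \<gamma> k l)"

lemma njv_mk: "normal_jumps_vanish Nx Ny hx hy (mk \<alpha> \<beta> \<gamma>) \<longleftrightarrow> cok \<alpha> \<beta> \<gamma>"
proof -
  have Nx0: "0 < Nx" and Ny0: "0 < Ny" using Nx Ny by auto
  have v: "(\<forall>t \<in> {brk hy j .. brk hy (Suc j)}.
        mk \<alpha> \<beta> \<gamma> (Suc i mod Nx) j (brk hx (Suc i mod Nx), t) \<bullet> (1, 0)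
          - mk \<alpha> \<beta> \<gamma> i j (brk hx (Suc i), t) \<bullet> (1, 0) = 0) \<longleftrightarrow>
        \<alpha> (Suc i mod Nx) j + \<gamma> (Suc i mod Nx) j = \<alpha> i j - \<gamma> i j" if "i < Nx" "j < Ny" for i j
  proof -
    have "Suc i mod Nx < Nx" using Nx0 by simp
    then have "\<forall>t \<in> {brk hy j .. brk hy (Suc j)}.
        mk \<alpha> \<beta> \<gamma> (Suc i mod Nx) j (brk hx (Suc i mod Nx), t) \<bullet> (1, 0)
          - mk \<alpha> \<beta> \<gamma> i j (brk hx (Suc i), t) \<bullet> (1, 0) = 
        (\<alpha> (Suc i mod Nx) j + \<gamma> (Suc i mod Nx) j) - (\<alpha> i j - \<gamma> i j)"
      using mk_left mk_right that by (simp add: inner_prod_def)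
    then show ?thesis using yrange[OF that(2)] by auto
  qed
  have h: "(\<forall>t \<in> {brk hx i .. brk hx (Suc i)}.
        mk \<alpha> \<beta> \<gamma> i (Suc j mod Ny) (t, brk hy (Suc j mod Ny)) \<bullet> (0, 1)
          - mk \<alpha> \<beta> \<gamma> i j (t, brk hy (Suc j)) \<bullet> (0, 1) = 0) \<longleftrightarrow>
        \<beta> i (Suc j mod Ny) - \<gamma> i (Suc j mod Ny) = \<beta> i j + \<gamma> i j" if "i < Nx" "j < Ny" for i j
  proof -
    have "Suc j mod Ny < Ny" using Ny0 by simp
    then have "\<forall>t \<in> {brk hx i .. brk hx (Suc i)}.
        mk \<alpha> \<beta> \<gamma> i (Suc j mod Ny) (t, brk hy (Suc j mod Ny)) \<bullet> (0, 1)
          - mk \<alpha> \<beta> \<gamma> i j (t, brk hy (Suc j)) \<bullet> (0, 1) = 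
        (\<beta> i (Suc j mod Ny) - \<gamma> i (Suc j mod Ny)) - (\<beta> i j + \<gamma> i j)"
      using mk_top mk_bot that by (simp add: inner_prod_def)
    then show ?thesis using xrange[OF that(1)] by auto
  qed
  show ?thesis unfolding normal_jumps_vanish_def cok_def using v h by simp
qed


definition Af where "Af u i j = fst (u i j (midx hx i, midy hy j))"
definition Bf where "Bf u i j = snd (u i j (midx hx i, midy hy j))"
definition Cf where "Cf u i j = fst (u i j (brk hx i, midy hy j)) - fst (u i j (midx hx i, midy hy j))"

lemma V_mk:
  assumes "u \<in> Vspace Nx Ny hx hy"
  shows "u = mk (Af u) (Bf u) (Cf u)"
proof (intro ext)
  fix i j p
  show "u i j p = mk (Af u) (Bf u) (Cf u) i j p"
  proof (cases "i < Nx \<and> j < Ny")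
    case True
    then obtain a b c where abc: "\<forall>p\<in>cell hx hy i j. u i j p = a *\<^sub>R (1, 0) + b *\<^sub>R (0, 1) + c *\<^sub>R psi3 hx hy i j p"
      and out: "\<forall>p. p \<notin> cell hx hy i j \<longrightarrow> u i j p = 0"
      using assms unfolding Vspace_def by blast
    have eq: "u i j p = (a + c * ((2 / hx i) * (midx hx i - fst p)), b + c * ((2 / hy j) * (snd p - midy hy j)))"
      if "p \<in> cell hx hy i j" for p
      using abc that by (simp add: psi3_def)
    have m: "(midx hx i, midy hy j) \<in> cell hx hy i j" "(brk hx i, midy hy j) \<in> cell hx hy i j"
      using True in_cell xrange yrange by auto
    have "Af u i j = a" "Bf u i j = b" using eq[OF m(1)] by (auto simp: Af_def Bf_def)
    moreover have "Cf u i j = c"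
      using eq[OF m(1)] eq[OF m(2)] hxp[of i] True by (simp add: Cf_def midx_def)
    ultimately show ?thesis
    proof (cases "p \<in> cell hx hy i j")
      case True
      then show ?thesis using eq[OF True] \<open>i < Nx \<and> j < Ny\<close> \<open>Af u i j = a\<close> \<open>Bf u i j = b\<close> \<open>Cf u i j = c\<close>
        by (simp add: mk_def)
    next
      case False
      moreover have "u i j p = 0" using out False by blast
      ultimately show ?thesis by (simp add: mk_def)
    qed
  next
    case False
    then show ?thesis using assms unfolding Vspace_def by (auto simp: mk_def)
  qed
qed

lemma mk_add: "mk \<alpha> \<beta> \<gamma> + mk \<alpha>' \<beta>' \<gamma>' = mk (\<lambda>i j. \<alpha> i j + \<alpha>' i j) (\<lambda>i j. \<beta> i j + \<beta>' i j) (\<lambda>i j. \<gamma> i j + \<gamma>' i j)"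
  by (auto simp: mk_def fun_eq_iff distrib_right add_divide_distrib)

lemma mk_scale: "bscale r (mk \<alpha> \<beta> \<gamma>) = mk (\<lambda>i j. r * \<alpha> i j) (\<lambda>i j. r * \<beta> i j) (\<lambda>i j. r * \<gamma> i j)"
  by (auto simp: mk_def fun_eq_iff algebra_simps)

lemma mk_zero: "mk (\<lambda>i j. 0) (\<lambda>i j. 0) (\<lambda>i j. 0) = 0"
  by (auto simp: mk_def fun_eq_iff zero_prod_def)

lemma mk_cong: "(\<And>i j. i < Nx \<Longrightarrow> j < Ny \<Longrightarrow> \<alpha> i j = \<alpha>' i j \<and> \<beta> i j = \<beta>' i j \<and> \<gamma> i j = \<gamma>' i j)
   \<Longrightarrow> mk \<alpha> \<beta> \<gamma> = mk \<alpha>' \<beta>' \<gamma>'"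
  by (auto simp: mk_def fun_eq_iff)

abbreviation "W \<equiv> {u \<in> Vspace Nx Ny hx hy. normal_jumps_vanish Nx Ny hx hy u}"

lemma W_iff: "u \<in> W \<longleftrightarrow> (\<exists>\<alpha> \<beta> \<gamma>. cok \<alpha> \<beta> \<gamma> \<and> u = mk \<alpha> \<beta> \<gamma>)"
proof
  assume "u \<in> W"
  then have "u = mk (Af u) (Bf u) (Cf u)" "normal_jumps_vanish Nx Ny hx hy u" using V_mk by auto
  then show "\<exists>\<alpha> \<beta> \<gamma>. cok \<alpha> \<beta> \<gamma> \<and> u = mk \<alpha> \<beta> \<gamma>" using njv_mk by metis
next
  assume "\<exists>\<alpha> \<beta> \<gamma>. cok \<alpha> \<beta> \<gamma> \<and> u = mk \<alpha> \<beta> \<gamma>"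
  then show "u \<in> W" using mk_in_V njv_mk by auto
qed

lemma W_sub: "bs.subspace W"
proof -
  have "0 \<in> W" unfolding W_iff
    by (rule exI[of _ "\<lambda>i j. 0"], rule exI[of _ "\<lambda>i j. 0"], rule exI[of _ "\<lambda>i j. 0"])
       (simp add: mk_zero cok_def)
  moreover have "x + y \<in> W" if xW: "x \<in> W" and yW: "y \<in> W" for x y
  proof -
    obtain a b c a' b' c' where h: "cok a b c" "x = mk a b c" "cok a' b' c'" "y = mk a' b' c'"
      using xW yW W_iff by meson
    have "cok (\<lambda>i j. a i j + a' i j) (\<lambda>i j. b i j + b' i j) (\<lambda>i j. c i j + c' i j)"
      unfolding cok_def
    proof (intro conjI allI impI)
      fix k l assume kl: "k < Nx" "l < Ny"
      show "a (Suc k mod Nx) l + a' (Suc k mod Nx) l + (c (Suc k mod Nx) l + c' (Suc k mod Nx) l) =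
         a k l + a' k l - (c k l + c' k l)"
        using h(1,3) kl unfolding cok_def by force
      show "b k (Suc l mod Ny) + b' k (Suc l mod Ny) - (c k (Suc l mod Ny) + c' k (Suc l mod Ny)) =
         b k l + b' k l + (c k l + c' k l)"
        using h(1,3) kl unfolding cok_def by force
    qed
    then show ?thesis unfolding W_iff h(2,4) mk_add by blast
  qed
  moreover have "bscale r x \<in> W" if xW: "x \<in> W" for x r
  proof -
    obtain a b c where h: "cok a b c" "x = mk a b c"
      using xW W_iff by meson
    have "cok (\<lambda>i j. r * a i j) (\<lambda>i j. r * b i j) (\<lambda>i j. r * c i j)"
      using h(1) unfolding cok_def by (auto simp flip: right_diff_distrib distrib_left)
    then show ?thesis unfolding W_iff h(2) mk_scale by blast
  qed
  ultimately show ?thesis unfolding bs.subspace_def by blast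
qed

definition Iset :: "(nat + nat + nat \<times> nat) set" where
  "Iset = Inl ` {..<Ny} \<union> Inr ` Inl ` {..<Nx} \<union> Inr ` Inr ` ({..<Nx - 1} \<times> {..<Ny - 1})"

definition th :: "nat + nat + nat \<times> nat \<Rightarrow> broken_field \<Rightarrow> real" where
  "th k u = (case k of Inl j \<Rightarrow> fst (u 0 j (brk hx 0, midy hy j))
     | Inr (Inl i) \<Rightarrow> snd (u i 0 (midx hx i, brk hy 0))
     | Inr (Inr (i, j)) \<Rightarrow> fst (u i j (brk hx i, midy hy j)) - fst (u i j (midx hx i, midy hy j)))"

lemma th_mk1: "j < Ny \<Longrightarrow> th (Inl j) (mk \<alpha> \<beta> \<gamma>) = \<alpha> 0 j + \<gamma> 0 j"
  using mk_left[of 0 j "midy hy j"] yrange[of j] Nx by (simp add: th_def)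

lemma th_mk2: "i < Nx \<Longrightarrow> th (Inr (Inl i)) (mk \<alpha> \<beta> \<gamma>) = \<beta> i 0 - \<gamma> i 0"
  using mk_bot[of i 0 "midx hx i"] xrange[of i] Ny by (simp add: th_def)

lemma th_mk3: "i < Nx \<Longrightarrow> j < Ny \<Longrightarrow> th (Inr (Inr (i, j))) (mk \<alpha> \<beta> \<gamma>) = \<gamma> i j"
  using mk_left[of i j "midy hy j"] yrange[of j] mk_mid[of i j] by (simp add: th_def)

lemma th_sum: "finite t \<Longrightarrow> th k (\<Sum>v\<in>t. bscale (w v) (f v)) = (\<Sum>v\<in>t. w v * th k (f v))"
  by (auto simp: th_def fst_sum_bs snd_sum_bs right_diff_distrib sum_subtractf split: sum.splits prod.splits)

lemma th_diff: "th k (u - v) = th k u - th k v"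
  by (auto simp: th_def split: sum.splits prod.splits)

lemma th_zero: "th k 0 = 0"
  by (auto simp: th_def split: sum.splits prod.splits)

definition tau :: "nat \<Rightarrow> nat \<Rightarrow> real" where
  "tau i' k = (if k = i' then 1 else 0) - (if k = Nx - 1 then 1 else 0)"
definition sig :: "nat \<Rightarrow> nat \<Rightarrow> real" where
  "sig j' l = (if l = j' then 1 else 0) - (if l = Ny - 1 then 1 else 0)"
definition rA :: "nat \<Rightarrow> nat \<Rightarrow> real" where
  "rA i' k = - (if k = i' then 1 else 0) - (if i' < k \<and> k < Nx - 1 then 2 else 0) - (if k = Nx - 1 then 1 else 0)"
definition rB :: "nat \<Rightarrow> nat \<Rightarrow> real" where
  "rB j' l = (if l = j' then 1 else 0) + (if j' < l \<and> l < Ny - 1 then 2 else 0) + (if l = Ny - 1 then 1 else 0)"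

definition bf :: "nat + nat + nat \<times> nat \<Rightarrow> broken_field" where
  "bf k = (case k of Inl j' \<Rightarrow> mk (\<lambda>k l. if l = j' then 1 else 0) (\<lambda>_ _. 0) (\<lambda>_ _. 0)
     | Inr (Inl i') \<Rightarrow> mk (\<lambda>_ _. 0) (\<lambda>k l. if k = i' then 1 else 0) (\<lambda>_ _. 0)
     | Inr (Inr (i', j')) \<Rightarrow> mk (\<lambda>k l. sig j' l * rA i' k) (\<lambda>k l. tau i' k * rB j' l) (\<lambda>k l. tau i' k * sig j' l))"

lemma rA_rel: assumes "i' < Nx - 1" "k < Nx"
  shows "rA i' (Suc k mod Nx) + tau i' (Suc k mod Nx) = rA i' k - tau i' k"
proof (cases "Suc k < Nx")
  case True
  then show ?thesis using assms by (auto simp: rA_def tau_def)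
next
  case False
  then have "k = Nx - 1" "Suc k = Nx" using assms by auto
  then have "k = Nx - 1" "Suc k mod Nx = 0" by auto
  then show ?thesis using assms by (auto simp: rA_def tau_def)
qed

lemma rB_rel: assumes "j' < Ny - 1" "l < Ny"
  shows "rB j' (Suc l mod Ny) - sig j' (Suc l mod Ny) = rB j' l + sig j' l"
proof (cases "Suc l < Ny")
  case True
  then show ?thesis using assms by (auto simp: rB_def sig_def)
next
  case False
  then have "l = Ny - 1" "Suc l = Ny" using assms by auto
  then have "l = Ny - 1" "Suc l mod Ny = 0" by auto
  then show ?thesis using assms by (auto simp: rB_def sig_def)
qed

lemma bf_W: "k \<in> Iset \<Longrightarrow> bf k \<in> W"
  unfolding W_iff
proof -
  assume k: "k \<in> Iset"
  show "\<exists>\<alpha> \<beta> \<gamma>. cok \<alpha> \<beta> \<gamma> \<and> bf k = mk \<alpha> \<beta> \<gamma>"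
  proof (cases k rule: sum.exhaust)
    case (Inl j')
    have "cok (\<lambda>k l. if l = j' then 1 else 0) (\<lambda>_ _. 0) (\<lambda>_ _. 0)" (is "cok ?a ?b ?c") by (simp add: cok_def)
    note cc = this
    show ?thesis unfolding Inl bf_def sum.case
      by (rule exI[of _ "\<lambda>k l. if l = j' then 1 else 0"], rule exI[of _ "\<lambda>_ _. 0"], rule exI[of _ "\<lambda>_ _. 0"]) (rule conjI[OF cc refl])
  next
    case (Inr x)
    show ?thesis
    proof (cases x rule: sum.exhaust)
      case (Inl i')
      have "cok (\<lambda>_ _. 0) (\<lambda>k l. if k = i' then 1 else 0) (\<lambda>_ _. 0)" (is "cok ?a ?b ?c") by (simp add: cok_def)
      note cc = this
      show ?thesis unfolding Inl \<open>k = Inr x\<close> bf_def sum.case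
        by (rule exI[of _ "\<lambda>_ _. 0"], rule exI[of _ "\<lambda>k l. if k = i' then 1 else 0"], rule exI[of _ "\<lambda>_ _. 0"]) (rule conjI[OF cc refl])
    next
      case (Inr y)
      then obtain i' j' where y: "k = Inr (Inr (i', j'))" using \<open>k = Inr x\<close> by (cases y) auto
      then have ij: "i' < Nx - 1" "j' < Ny - 1" using k by (auto simp: Iset_def)
      have "cok (\<lambda>k l. sig j' l * rA i' k) (\<lambda>k l. tau i' k * rB j' l) (\<lambda>k l. tau i' k * sig j' l)"
        unfolding cok_def
      proof (intro conjI allI impI)
        fix k l assume kl: "k < Nx" "l < Ny"
        show "sig j' l * rA i' (Suc k mod Nx) + tau i' (Suc k mod Nx) * sig j' l =
              sig j' l * rA i' k - tau i' k * sig j' l"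
          using arg_cong[OF rA_rel[OF ij(1) kl(1)], of "\<lambda>x. sig j' l * x"] by (simp add: algebra_simps)
        show "tau i' k * rB j' (Suc l mod Ny) - tau i' k * sig j' (Suc l mod Ny) =
              tau i' k * rB j' l + tau i' k * sig j' l"
          using arg_cong[OF rB_rel[OF ij(2) kl(2)], of "\<lambda>x. tau i' k * x"] by (simp add: algebra_simps)
      qed
      note cc = this
      show ?thesis unfolding y bf_def sum.case prod.case
        by (rule exI[of _ "\<lambda>k l. sig j' l * rA i' k"], rule exI[of _ "\<lambda>k l. tau i' k * rB j' l"], rule exI[of _ "\<lambda>k l. tau i' k * sig j' l"]) (rule conjI[OF cc refl])
    qed
  qed
qed

lemma th_bf: assumes "k \<in> Iset" "l \<in> Iset" shows "th k (bf l) = (if k = l then 1 else 0)"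
  using assms unfolding Iset_def
  by (auto simp: bf_def th_mk1 th_mk2 th_mk3 tau_def sig_def rA_def rB_def split: if_splits)

lemma uniq: assumes "v \<in> W" "\<forall>k\<in>Iset. th k v = 0" shows "v = 0"
proof -
  obtain \<alpha> \<beta> \<gamma> where c: "cok \<alpha> \<beta> \<gamma>" and v: "v = mk \<alpha> \<beta> \<gamma>" using assms(1) W_iff by meson
  have h1: "\<alpha> 0 j + \<gamma> 0 j = 0" if "j < Ny" for j
  proof -
    have "Inl j \<in> Iset" using that by (simp add: Iset_def)
    then have "th (Inl j) v = 0" using assms(2) by blast
    then show ?thesis using th_mk1[OF that, of \<alpha> \<beta> \<gamma>] v by simp
  qed
  have h2: "\<beta> i 0 - \<gamma> i 0 = 0" if "i < Nx" for i
  proof -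
    have "Inr (Inl i) \<in> Iset" using that by (simp add: Iset_def)
    then have "th (Inr (Inl i)) v = 0" using assms(2) by blast
    then show ?thesis using th_mk2[OF that, of \<alpha> \<beta> \<gamma>] v by simp
  qed
  have h3: "\<gamma> i j = 0" if "i < Nx - 1" "j < Ny - 1" for i j
  proof -
    have "Inr (Inr (i, j)) \<in> Iset" using that by (simp add: Iset_def)
    then have "th (Inr (Inr (i, j))) v = 0" using assms(2) by blast
    moreover have "i < Nx" "j < Ny" using that by auto
    ultimately show ?thesis using th_mk3[of i j \<alpha> \<beta> \<gamma>] v by simp
  qed
  have row: "\<forall>k<Nx. \<alpha> (Suc k mod Nx) l + \<gamma> (Suc k mod Nx) l = \<alpha> k l - \<gamma> k l" if "l < Ny" for l
    using c that unfolding cok_def by blast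
  have col: "\<forall>l<Ny. \<beta> k (Suc l mod Ny) + (- \<gamma> k (Suc l mod Ny)) = \<beta> k l - (- \<gamma> k l)" if "k < Nx" for k
    using c that unfolding cok_def by auto
  have s1: "\<gamma> k l = 0" if l: "l < Ny - 1" and k: "k < Nx" for k l
  proof (cases "k < Nx - 1")
    case True then show ?thesis using h3 l by blast
  next
    case False
    then have "k = Nx - 1" using k by auto
    moreover have r: "\<forall>k<Nx. \<alpha> (Suc k mod Nx) l + \<gamma> (Suc k mod Nx) l = \<alpha> k l - \<gamma> k l"
      using row l by simp
    moreover have z: "\<forall>k<Nx - 1. \<gamma> k l = 0" using h3 l by blast
    ultimately show ?thesis using cyc_A[OF Nx, of "\<lambda>k. \<alpha> k l" "\<lambda>k. \<gamma> k l"] by blast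
  qed
  have s2: "\<gamma> k l = 0" if l: "l < Ny" and k: "k < Nx" for k l
  proof (cases "l < Ny - 1")
    case True then show ?thesis using s1 k by blast
  next
    case False
    then have "l = Ny - 1" using l by auto
    moreover have r: "\<forall>l<Ny. \<beta> k (Suc l mod Ny) + (- \<gamma> k (Suc l mod Ny)) = \<beta> k l - (- \<gamma> k l)"
      using col k by blast
    moreover have z: "\<forall>l<Ny - 1. - \<gamma> k l = 0" using s1 k by simp
    ultimately have "- \<gamma> k l = 0" using cyc_A[OF Ny, of "\<lambda>l. \<beta> k l" "\<lambda>l. - \<gamma> k l"] by blast
    then show ?thesis by simp
  qed
  have s3: "\<alpha> k l = 0" if l: "l < Ny" and k: "k < Nx" for k l
  proof -
    have r: "\<forall>k<Nx. \<alpha> (Suc k mod Nx) l + \<gamma> (Suc k mod Nx) l = \<alpha> k l - \<gamma> k l"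
      using row l by simp
    have z: "\<forall>k<Nx. \<gamma> k l = 0" using s2 l by blast
    have "\<alpha> 0 l + \<gamma> 0 l = 0" using h1 l by blast
    then show ?thesis using cyc_B[of Nx "\<lambda>k. \<alpha> k l" "\<lambda>k. \<gamma> k l"] r z k by blast
  qed
  have s4: "\<beta> k l = 0" if l: "l < Ny" and k: "k < Nx" for k l
  proof -
    have r: "\<forall>l<Ny. \<beta> k (Suc l mod Ny) + (- \<gamma> k (Suc l mod Ny)) = \<beta> k l - (- \<gamma> k l)"
      using col k by blast
    have z: "\<forall>l<Ny. - \<gamma> k l = 0" using s2 k by simp
    have "\<beta> k 0 + (- \<gamma> k 0) = 0" using h2 k by simp
    then show ?thesis using cyc_B[of Ny "\<lambda>l. \<beta> k l" "\<lambda>l. - \<gamma> k l"] r z l by blast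
  qed
  have "mk \<alpha> \<beta> \<gamma> = mk (\<lambda>i j. 0) (\<lambda>i j. 0) (\<lambda>i j. 0)"
    by (rule mk_cong) (simp add: s2 s3 s4)
  then show ?thesis using v mk_zero by simp
qed

lemma finite_Iset: "finite Iset" by (simp add: Iset_def)

lemma spanning: assumes u: "u \<in> W" shows "u = (\<Sum>k\<in>Iset. bscale (th k u) (bf k))"
proof -
  define S where "S = (\<Sum>k\<in>Iset. bscale (th k u) (bf k))"
  have "S \<in> W" unfolding S_def
    by (rule bs.subspace_sum[OF W_sub]) (rule bs.subspace_scale[OF W_sub bf_W])
  then have d: "u - S \<in> W" using bs.subspace_diff[OF W_sub u] by blast
  have "th l (u - S) = 0" if l: "l \<in> Iset" for l
  proof -
    have "th l S = (\<Sum>k\<in>Iset. th k u * th l (bf k))"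
      unfolding S_def by (rule th_sum[OF finite_Iset])
    also have "\<dots> = (\<Sum>k\<in>Iset. if l = k then th k u else 0)"
      by (rule sum.cong) (auto simp: th_bf[OF l])
    also have "\<dots> = th l u" using l finite_Iset by simp
    finally show ?thesis by (simp add: th_diff)
  qed
  then have "u - S = 0" using uniq[OF d] by blast
  then show ?thesis unfolding S_def by simp
qed

lemma bf_inj: "inj_on bf Iset"
proof
  fix k l assume k: "k \<in> Iset" and l: "l \<in> Iset" and e: "bf k = bf l"
  have "th k (bf k) = 1" using th_bf[OF k k] by simp
  then have "th k (bf l) = 1" using e by simp
  then show "k = l" using th_bf[OF k l] by (simp split: if_splits)
qed

lemma indep_aux:
  assumes t: "finite t" "t \<subseteq> bf ` Iset" and s: "(\<Sum>v\<in>t. bscale (w v) v) = 0" and v: "v \<in> t"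
  shows "w v = 0"
proof -
  obtain l where l: "l \<in> Iset" "v = bf l" using t v by blast
  have e1: "th l (\<Sum>v\<in>t. bscale (w v) v) = 0" using s th_zero by simp
  have e2: "th l (\<Sum>v\<in>t. bscale (w v) v) = (\<Sum>x\<in>t. w x * th l x)" using th_sum[OF t(1), of l w "\<lambda>x. x"] by simp
  have e3: "(\<Sum>x\<in>t. w x * th l x) = (\<Sum>x\<in>t. if x = v then w x else 0)"
  proof (rule sum.cong)
    fix x assume x: "x \<in> t"
    then obtain m where m: "m \<in> Iset" "x = bf m" using t by blast
    have "x = v \<longleftrightarrow> m = l" using bf_inj m l inj_on_eq_iff by metis
    then show "w x * th l x = (if x = v then w x else 0)" using th_bf[OF l(1) m(1)] m by auto
  qed simp
  have e4: "(\<Sum>x\<in>t. if x = v then w x else 0) = w v" by (subst sum.delta[OF t(1)]) (simp add: v)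
  show "w v = 0" using e1 e2 e3 e4 by linarith
qed

lemma indep: "bs.independent (bf ` Iset)"
  unfolding bs.independent_explicit_module using indep_aux by blast

lemma card_Iset: "card Iset = Nx * Ny + 1"
proof -
  have "card Iset = card (Inl ` {..<Ny} :: (nat + nat + nat \<times> nat) set) + (card (Inr ` Inl ` {..<Nx} :: (nat + nat + nat \<times> nat) set)
      + card (Inr ` Inr ` ({..<Nx - 1} \<times> {..<Ny - 1}) :: (nat + nat + nat \<times> nat) set))"
    unfolding Iset_def Un_assoc
    by (subst card_Un_disjoint, simp, simp, blast, subst card_Un_disjoint, auto)
  also have "\<dots> = Ny + (Nx + (Nx - 1) * (Ny - 1))"
    by (simp add: card_image inj_on_def card_cartesian_product)
  also have "\<dots> = Nx * Ny + 1"
  proof -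
    obtain a b where "Nx = Suc a" "Ny = Suc b" using Nx Ny by (metis Suc_le_D One_nat_def)
    then show ?thesis by simp
  qed
  finally show ?thesis .
qed

end

theorem proposition15:
  fixes Nx Ny :: nat and hx hy :: "nat \<Rightarrow> real"
  assumes "Nx \<ge> 1" and "Ny \<ge> 1"
    and "\<And>i. i < Nx \<Longrightarrow> hx i > 0"
    and "\<And>j. j < Ny \<Longrightarrow> hy j > 0"
  shows "vector_space.dim bscale
           {u \<in> Vspace Nx Ny hx hy. normal_jumps_vanish Nx Ny hx hy u} = Nx * Ny + 1"
proof -
  interpret mesh Nx Ny hx hy using assms by unfold_locales auto
  show ?thesis
  proof (rule bs.dim_unique[of "bf ` Iset"])
    show "bf ` Iset \<subseteq> W" using bf_W by blast
    show "W \<subseteq> bs.span (bf ` Iset)"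
    proof
      fix u assume u: "u \<in> W"
      show "u \<in> bs.span (bf ` Iset)"
        by (subst spanning[OF u]) (intro bs.span_sum bs.span_scale bs.span_base imageI)
    qed
    show "bs.independent (bf ` Iset)" by (rule indep)
    show "card (bf ` Iset) = Nx * Ny + 1" using card_image[OF bf_inj] card_Iset by simp
  qed
qed

end
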